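(* Let $K$ be a field of characteristic zero. For $0\le i\le n-1$ let $E_i$ be the injective hull of $K$ over $K[X_1,\ldots,X_i]$ ($E_0=K$), and let $E_{n-1}[X_n]=\bigoplus_{j\ge0}E_{n-1}X_n^j$ (which is isomorphic to $H^{n-1}_{(X_1,\ldots,X_{n-1})}(K[X_1,\ldots,X_n])$). Then for $c=1,\ldots,n$, \[H_i(\partial_c,\partial_{c+1},\ldots,\partial_n;E_{n-1}[X_n])=\begin{cases}0& i\ne1,\\ E_{c-1}& i=1.\end{cases}\]
   Context: $E_i=\bigoplus_{r_1,\ldots,r_i\ge0}K\,\frac{1}{X_1\cdots X_iX_1^{r_1}\cdots X_i^{r_i}}$, where $X_j$ lowers $r_j$ by one (giving $0$ if $r_j=0$) and $\partial_j$ sends the basis element with exponent $r_j$ to $(-r_j-1)$ times the one with $r_j$ replaced by $r_j+1$. On $E_{n-1}[X_n]$, $X_j,\partial_j$ ($j<n$) act on the $E_{n-1}$ factor and $X_n,\partial_n$ act on the polynomial variable $X_n$ by multiplication and differentiation. $H_i(\partial_c,\ldots,\partial_n;N)$ is the $i$-th Koszul homology with respect to the commuting $K$-linear maps $\partial_c,\ldots,\partial_n$. *)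

theory Defs
  imports Main
begin

text \<open>Multi-indices are functions nat => nat; coordinate k (1 <= k <= m) is the exponent
 of variable k.  A basis vector of E_m with exponent vector r stands for
 1/(X_1...X_m X_1^r_1...X_m^r_m).\<close>

definition valid_idx :: "nat \<Rightarrow> (nat \<Rightarrow> nat) \<Rightarrow> bool" where
  "valid_idx m a \<longleftrightarrow> (\<forall>k. (k = 0 \<or> m < k) \<longrightarrow> a k = 0)"

text \<open>Emod i models E_i; Emod n models E_(n-1)[X_n], where coordinate n is
 the exponent of the polynomial variable X_n.\<close>
definition Emod :: "nat \<Rightarrow> ((nat \<Rightarrow> nat) \<Rightarrow> 'a::zero) set" where
  "Emod m = {f. finite {a. f a \<noteq> 0} \<and> (\<forall>a. f a \<noteq> 0 \<longrightarrow> valid_idx m a)}"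

text \<open>X_k on the inverse-monomial part: lowers r_k by one (0 if r_k = 0).\<close>
definition Xloc :: "nat \<Rightarrow> ((nat \<Rightarrow> nat) \<Rightarrow> 'a) \<Rightarrow> (nat \<Rightarrow> nat) \<Rightarrow> 'a" where
  "Xloc k f = (\<lambda>a. f (a(k := Suc (a k))))"

text \<open>d_k on the inverse-monomial part: basis(r) maps to (-r_k-1) basis(r + e_k).\<close>
definition Dloc :: "nat \<Rightarrow> ((nat \<Rightarrow> nat) \<Rightarrow> 'a::comm_ring_1) \<Rightarrow> (nat \<Rightarrow> nat) \<Rightarrow> 'a" where
  "Dloc k f = (\<lambda>a. if a k = 0 then 0 else - of_nat (a k) * f (a(k := a k - 1)))"

definition Xpol :: "nat \<Rightarrow> ((nat \<Rightarrow> nat) \<Rightarrow> 'a::zero) \<Rightarrow> (nat \<Rightarrow> nat) \<Rightarrow> 'a" where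
  "Xpol k f = (\<lambda>a. if a k = 0 then 0 else f (a(k := a k - 1)))"

definition Dpol :: "nat \<Rightarrow> ((nat \<Rightarrow> nat) \<Rightarrow> 'a::comm_semiring_1) \<Rightarrow> (nat \<Rightarrow> nat) \<Rightarrow> 'a" where
  "Dpol k f = (\<lambda>a. of_nat (Suc (a k)) * f (a(k := Suc (a k))))"

definition DN :: "nat \<Rightarrow> nat \<Rightarrow> ((nat \<Rightarrow> nat) \<Rightarrow> 'a::comm_ring_1) \<Rightarrow> (nat \<Rightarrow> nat) \<Rightarrow> 'a" where
  "DN n k = (if k < n then Dloc k else Dpol k)"

definition KC :: "nat \<Rightarrow> nat \<Rightarrow> nat \<Rightarrow> (nat set \<Rightarrow> (nat \<Rightarrow> nat) \<Rightarrow> 'a::zero) set" where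
  "KC n c i = {z. (\<forall>S. z S \<in> Emod n) \<and> (\<forall>S. z S \<noteq> (\<lambda>a. 0) \<longrightarrow> S \<subseteq> {c..n} \<and> card S = i)}"

text \<open>Koszul differential: d(e_S m) = sum over s in S of (-1)^#{t in S. t < s} e_(S-{s}) d_s m.\<close>
definition kd :: "nat \<Rightarrow> nat \<Rightarrow> (nat set \<Rightarrow> (nat \<Rightarrow> nat) \<Rightarrow> 'a::comm_ring_1)
                   \<Rightarrow> nat set \<Rightarrow> (nat \<Rightarrow> nat) \<Rightarrow> 'a" where
  "kd n c z = (\<lambda>T a. if T \<subseteq> {c..n} then
      (\<Sum>s\<in>{c..n} - T. (-1) ^ card {t\<in>T. t < s} * DN n s (z (insert s T)) a) else 0)"

definition Kcycles :: "nat \<Rightarrow> nat \<Rightarrow> nat \<Rightarrow> (nat set \<Rightarrow> (nat \<Rightarrow> nat) \<Rightarrow> 'a::comm_ring_1) set" where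
  "Kcycles n c i = {z \<in> KC n c i. kd n c z = (\<lambda>T a. 0)}"

definition Kbound :: "nat \<Rightarrow> nat \<Rightarrow> nat \<Rightarrow> (nat set \<Rightarrow> (nat \<Rightarrow> nat) \<Rightarrow> 'a::comm_ring_1) set" where
  "Kbound n c i = kd n c ` KC n c (Suc i)"

definition Kacyclic_at :: "nat \<Rightarrow> nat \<Rightarrow> nat \<Rightarrow> 'a::comm_ring_1 itself \<Rightarrow> bool" where
  "Kacyclic_at n c i (_::'a itself) \<longleftrightarrow> (Kcycles n c i :: (nat set \<Rightarrow> (nat \<Rightarrow> nat) \<Rightarrow> 'a) set) \<subseteq> Kbound n c i"

definition H1_iso :: "nat \<Rightarrow> nat \<Rightarrow> (((nat \<Rightarrow> nat) \<Rightarrow> 'a::comm_ring_1) \<Rightarrow> nat set \<Rightarrow> (nat \<Rightarrow> nat) \<Rightarrow> 'a) \<Rightarrow> bool" where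
  "H1_iso n c \<phi> \<longleftrightarrow>
     (\<forall>e\<in>Emod (c - 1). \<phi> e \<in> Kcycles n c 1)
   \<and> (\<forall>x\<in>Emod (c - 1). \<forall>y\<in>Emod (c - 1).
        \<phi> (\<lambda>a. x a + y a) = (\<lambda>S a. \<phi> x S a + \<phi> y S a))
   \<and> (\<forall>s. \<forall>x\<in>Emod (c - 1). \<phi> (\<lambda>a. s * x a) = (\<lambda>S a. s * \<phi> x S a))
   \<and> (\<forall>z\<in>Kcycles n c 1. \<exists>!e. e \<in> Emod (c - 1) \<and> (\<lambda>S a. z S a - \<phi> e S a) \<in> Kbound n c 1)
   \<and> (\<forall>j. 1 \<le> j \<and> j < c \<longrightarrow> (\<forall>x\<in>Emod (c - 1).
        (\<lambda>S a. \<phi> (Xloc j x) S a - Xloc j (\<phi> x S) a) \<in> Kbound n c 1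
      \<and> (\<lambda>S a. \<phi> (Dloc j x) S a - Dloc j (\<phi> x S) a) \<in> Kbound n c 1))"

end

theory Submission imports Defs "HOL-Library.Function_Algebras" begin

lemma Emod_iff: "f \<in> Emod m \<longleftrightarrow> finite {a. f a \<noteq> 0} \<and> (\<forall>a. f a \<noteq> 0 \<longrightarrow> valid_idx m a)"
  by (simp add: Emod_def)

lemma Emod_zero[simp]: "(\<lambda>a. 0) \<in> Emod m"
  by (simp add: Emod_def)

lemma Emod_zero'[simp]: "0 \<in> Emod m"
  by (simp add: Emod_def)

lemma Emod_add: "(f::_\<Rightarrow>'a::monoid_add) \<in> Emod m \<Longrightarrow> g \<in> Emod m \<Longrightarrow> f + g \<in> Emod m"
proof -
  assume f: "f \<in> Emod m" and g: "g \<in> Emod m"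
  have "{a. (f+g) a \<noteq> 0} \<subseteq> {a. f a \<noteq> 0} \<union> {a. g a \<noteq> 0}" by auto
  then show ?thesis using f g unfolding Emod_def
    by (auto intro: finite_subset)
qed

lemma Emod_uminus: "(f::_\<Rightarrow>'a::ab_group_add) \<in> Emod m \<Longrightarrow> - f \<in> Emod m"
  unfolding Emod_def by auto

lemma Emod_diff: "(f::_\<Rightarrow>'a::ab_group_add) \<in> Emod m \<Longrightarrow> g \<in> Emod m \<Longrightarrow> f - g \<in> Emod m"
  using Emod_add[of f m "-g"] Emod_uminus[of g m] by simp

lemma Emod_mono: "f \<in> Emod m \<Longrightarrow> m \<le> m' \<Longrightarrow> f \<in> Emod m'"
  unfolding Emod_def valid_idx_def by auto

lemma Emod_Dloc: assumes "f \<in> Emod m" "1 \<le> k" "k \<le> m"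
  shows "Dloc k (f::_\<Rightarrow>'a::comm_ring_1) \<in> Emod m"
proof -
  have "{a. Dloc k f a \<noteq> 0} \<subseteq> (\<lambda>b. b(k := Suc (b k))) ` {a. f a \<noteq> 0}"
  proof
    fix a assume "a \<in> {a. Dloc k f a \<noteq> 0}"
    then have "a k \<noteq> 0" "f (a(k := a k - 1)) \<noteq> 0" by (auto simp: Dloc_def split: if_splits)
    then show "a \<in> (\<lambda>b. b(k := Suc (b k))) ` {a. f a \<noteq> 0}"
      by (intro image_eqI[of _ _ "a(k := a k - 1)"]) auto
  qed
  moreover have "valid_idx m a" if "Dloc k f a \<noteq> 0" for a
  proof -
    from that have "a k \<noteq> 0" "f (a(k := a k - 1)) \<noteq> 0" by (auto simp: Dloc_def split: if_splits)
    then have "valid_idx m (a(k := a k - 1))" using assms(1) by (auto simp: Emod_def)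
    then show ?thesis using assms(2,3) unfolding valid_idx_def
      by (metis fun_upd_other not_one_le_zero not_le)
  qed
  ultimately show ?thesis using assms(1) by (auto simp: Emod_def intro: finite_subset)
qed

lemma Emod_Dpol: assumes "f \<in> Emod m"
  shows "Dpol k (f::_\<Rightarrow>'a::comm_ring_1) \<in> Emod m"
proof -
  have "{a. Dpol k f a \<noteq> 0} \<subseteq> (\<lambda>b. b(k := b k - 1)) ` {a. f a \<noteq> 0}"
  proof
    fix a assume "a \<in> {a. Dpol k f a \<noteq> 0}"
    then have "f (a(k := Suc (a k))) \<noteq> 0" by (auto simp: Dpol_def)
    then show "a \<in> (\<lambda>b. b(k := b k - 1)) ` {a. f a \<noteq> 0}"
      by (intro image_eqI[of _ _ "a(k := Suc (a k))"]) auto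
  qed
  moreover have "valid_idx m a" if "Dpol k f a \<noteq> 0" for a
  proof -
    from that have "f (a(k := Suc (a k))) \<noteq> 0" by (auto simp: Dpol_def)
    then have "valid_idx m (a(k := Suc (a k)))" using assms(1) by (auto simp: Emod_def)
    then show ?thesis unfolding valid_idx_def
      by (metis fun_upd_apply nat.distinct(1))
  qed
  ultimately show ?thesis using assms(1) by (auto simp: Emod_def intro: finite_subset)
qed

definition Iloc :: "nat \<Rightarrow> ((nat \<Rightarrow> nat) \<Rightarrow> 'a::field) \<Rightarrow> (nat \<Rightarrow> nat) \<Rightarrow> 'a" where
  "Iloc k f = (\<lambda>a. - f (a(k := Suc (a k))) / of_nat (Suc (a k)))"
definition Ipol :: "nat \<Rightarrow> ((nat \<Rightarrow> nat) \<Rightarrow> 'a::field) \<Rightarrow> (nat \<Rightarrow> nat) \<Rightarrow> 'a" where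
  "Ipol k f = (\<lambda>a. if a k = 0 then 0 else f (a(k := a k - 1)) / of_nat (a k))"
definition Pc :: "nat \<Rightarrow> ((nat \<Rightarrow> nat) \<Rightarrow> 'a::zero) \<Rightarrow> (nat \<Rightarrow> nat) \<Rightarrow> 'a" where
  "Pc k f = (\<lambda>a. if a k = 0 then f a else 0)"

lemma Emod_Iloc: assumes "f \<in> Emod m"
  shows "Iloc k (f::_\<Rightarrow>'a::field_char_0) \<in> Emod m"
proof -
  have "{a. Iloc k f a \<noteq> 0} \<subseteq> (\<lambda>b. b(k := b k - 1)) ` {a. f a \<noteq> 0}"
  proof
    fix a assume "a \<in> {a. Iloc k f a \<noteq> 0}"
    then have "f (a(k := Suc (a k))) \<noteq> 0" by (auto simp: Iloc_def)
    then show "a \<in> (\<lambda>b. b(k := b k - 1)) ` {a. f a \<noteq> 0}"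
      by (intro image_eqI[of _ _ "a(k := Suc (a k))"]) auto
  qed
  moreover have "valid_idx m a" if "Iloc k f a \<noteq> 0" for a
  proof -
    from that have "f (a(k := Suc (a k))) \<noteq> 0" by (auto simp: Iloc_def)
    then have "valid_idx m (a(k := Suc (a k)))" using assms(1) by (auto simp: Emod_def)
    then show ?thesis unfolding valid_idx_def
      by (metis fun_upd_apply nat.distinct(1))
  qed
  ultimately show ?thesis using assms(1) by (auto simp: Emod_def intro: finite_subset)
qed

lemma Emod_Ipol: assumes "f \<in> Emod m" "1 \<le> k" "k \<le> m"
  shows "Ipol k (f::_\<Rightarrow>'a::field_char_0) \<in> Emod m"
proof -
  have "{a. Ipol k f a \<noteq> 0} \<subseteq> (\<lambda>b. b(k := Suc (b k))) ` {a. f a \<noteq> 0}"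
  proof
    fix a assume "a \<in> {a. Ipol k f a \<noteq> 0}"
    then have "a k \<noteq> 0" "f (a(k := a k - 1)) \<noteq> 0" by (auto simp: Ipol_def split: if_splits)
    then show "a \<in> (\<lambda>b. b(k := Suc (b k))) ` {a. f a \<noteq> 0}"
      by (intro image_eqI[of _ _ "a(k := a k - 1)"]) auto
  qed
  moreover have "valid_idx m a" if "Ipol k f a \<noteq> 0" for a
  proof -
    from that have "a k \<noteq> 0" "f (a(k := a k - 1)) \<noteq> 0" by (auto simp: Ipol_def split: if_splits)
    then have "valid_idx m (a(k := a k - 1))" using assms(1) by (auto simp: Emod_def)
    then show ?thesis using assms(2,3) unfolding valid_idx_def
      by (metis fun_upd_other not_one_le_zero not_le)
  qed
  ultimately show ?thesis using assms(1) by (auto simp: Emod_def intro: finite_subset)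
qed

lemma Emod_Pc: assumes "f \<in> Emod k" "1 \<le> k"
  shows "Pc k f \<in> Emod (k - 1)"
proof -
  have "{a. Pc k f a \<noteq> 0} \<subseteq> {a. f a \<noteq> 0}" by (auto simp: Pc_def)
  moreover have "valid_idx (k - 1) a" if "Pc k f a \<noteq> 0" for a
  proof -
    from that have ak: "a k = 0" and fa: "f a \<noteq> 0" by (auto simp: Pc_def split: if_splits)
    then have v: "valid_idx k a" using assms by (auto simp: Emod_def)
    show ?thesis unfolding valid_idx_def
    proof (intro allI impI)
      fix j assume "j = 0 \<or> k - 1 < j"
      then have "j = k \<or> j = 0 \<or> k < j" by auto
      then show "a j = 0" using ak v by (auto simp: valid_idx_def)
    qed
  qed
  ultimately show ?thesis using assms(1) by (auto simp: Emod_def intro: finite_subset)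
qed

lemma Dpol_Ipol: "Dpol k (Ipol k (f::_\<Rightarrow>'a::field_char_0)) = f"
  by (rule ext) (simp add: Dpol_def Ipol_def del: of_nat_Suc)

lemma Iloc_Dloc: "Iloc k (Dloc k (f::_\<Rightarrow>'a::field_char_0)) = f"
  by (rule ext) (simp add: Iloc_def Dloc_def del: of_nat_Suc)

lemma Dloc_Iloc: "Dloc k (Iloc k (f::_\<Rightarrow>'a::field_char_0)) a = (if a k = 0 then 0 else f a)"
  by (simp add: Iloc_def Dloc_def del: of_nat_Suc)

lemma Pc_Dloc_Iloc: "Pc k f + Dloc k (Iloc k (f::_\<Rightarrow>'a::field_char_0)) = f"
  by (rule ext) (simp add: Dloc_Iloc Pc_def)


lemma Dloc_zero[simp]: "Dloc k (0::_\<Rightarrow>'a::comm_ring_1) = 0" "Dloc k (\<lambda>a. 0::'a) = 0"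
  by (auto simp: Dloc_def fun_eq_iff)
lemma Dpol_zero[simp]: "Dpol k (0::_\<Rightarrow>'a::comm_ring_1) = 0" "Dpol k (\<lambda>a. 0::'a) = 0"
  by (auto simp: Dpol_def fun_eq_iff)
lemma DN_zero[simp]: "DN n k (0::_\<Rightarrow>'a::comm_ring_1) = 0" "DN n k (\<lambda>a. 0::'a) = 0"
  by (auto simp: DN_def)
lemma Iloc_zero[simp]: "Iloc k (0::_\<Rightarrow>'a::field) = 0"
  by (auto simp: Iloc_def fun_eq_iff)

lemma Dloc_add: "Dloc k (f + g :: _\<Rightarrow>'a::comm_ring_1) = Dloc k f + Dloc k g"
  by (auto simp: Dloc_def fun_eq_iff algebra_simps)
lemma Dloc_uminus: "Dloc k (- f :: _\<Rightarrow>'a::comm_ring_1) = - Dloc k f"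
  by (auto simp: Dloc_def fun_eq_iff algebra_simps)
lemma Dloc_diff: "Dloc k (f - g :: _\<Rightarrow>'a::comm_ring_1) = Dloc k f - Dloc k g"
  by (auto simp: Dloc_def fun_eq_iff algebra_simps)
lemma Dpol_add: "Dpol k (f + g :: _\<Rightarrow>'a::comm_ring_1) = Dpol k f + Dpol k g"
  by (auto simp: Dpol_def fun_eq_iff algebra_simps)
lemma Dpol_uminus: "Dpol k (- f :: _\<Rightarrow>'a::comm_ring_1) = - Dpol k f"
  by (auto simp: Dpol_def fun_eq_iff algebra_simps)
lemma DN_add: "DN n k (f + g :: _\<Rightarrow>'a::comm_ring_1) = DN n k f + DN n k g"
  by (auto simp: DN_def Dloc_add Dpol_add)
lemma DN_uminus: "DN n k (- f :: _\<Rightarrow>'a::comm_ring_1) = - DN n k f"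
  by (auto simp: DN_def Dloc_uminus Dpol_uminus)

lemma Dloc_Dloc_comm: "j \<noteq> k \<Longrightarrow> Dloc j (Dloc k (f::_\<Rightarrow>'a::comm_ring_1)) = Dloc k (Dloc j f)"
  by (auto simp: Dloc_def fun_eq_iff fun_upd_twist algebra_simps)
lemma Dloc_Dpol_comm: "j \<noteq> k \<Longrightarrow> Dloc j (Dpol k (f::_\<Rightarrow>'a::comm_ring_1)) = Dpol k (Dloc j f)"
  by (auto simp: Dloc_def Dpol_def fun_eq_iff fun_upd_twist algebra_simps)
lemma Dloc_DN_comm: "j \<noteq> k \<Longrightarrow> Dloc j (DN n k (f::_\<Rightarrow>'a::comm_ring_1)) = DN n k (Dloc j f)"
  by (auto simp: DN_def Dloc_Dloc_comm Dloc_Dpol_comm)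

lemma Dloc_inj: "Dloc k (f::_\<Rightarrow>'a::field_char_0) = 0 \<Longrightarrow> f = 0"
  by (metis Iloc_Dloc Iloc_zero)

type_synonym 'a ch = "nat set \<Rightarrow> (nat \<Rightarrow> nat) \<Rightarrow> 'a"

lemma KC_iff: "z \<in> KC n c i \<longleftrightarrow> (\<forall>S. z S \<in> Emod n) \<and> (\<forall>S. z S \<noteq> 0 \<longrightarrow> S \<subseteq> {c..n} \<and> card S = i)"
  by (simp add: KC_def zero_fun_def)

lemma KC_zero[simp]: "(0::'a::zero ch) \<in> KC n c i"
  by (simp add: KC_iff)

lemma KC_add: assumes "(z::'a::monoid_add ch) \<in> KC n c i" "w \<in> KC n c i" shows "z + w \<in> KC n c i"
  unfolding KC_iff
proof (intro conjI; intro allI impI)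
  fix S show "(z + w) S \<in> Emod n" using assms by (auto simp: KC_iff intro: Emod_add)
next
  fix S assume h: "(z + w) S \<noteq> 0"
  have "z S \<noteq> 0 \<or> w S \<noteq> 0"
  proof (rule ccontr)
    assume "\<not> (z S \<noteq> 0 \<or> w S \<noteq> 0)"
    then have "(z + w) S = 0" by simp
    then show False using h by simp
  qed
  then show "S \<subseteq> {c..n} \<and> card S = i" using assms by (auto simp: KC_iff)
qed

lemma KC_uminus: "(z::'a::ab_group_add ch) \<in> KC n c i \<Longrightarrow> - z \<in> KC n c i"
  unfolding KC_iff by (auto intro: Emod_uminus)

lemma KC_diff: "(z::'a::ab_group_add ch) \<in> KC n c i \<Longrightarrow> w \<in> KC n c i \<Longrightarrow> z - w \<in> KC n c i"
  using KC_add[of z n c i "-w"] KC_uminus[of w n c i] by simp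

definition Dc :: "nat \<Rightarrow> 'a::comm_ring_1 ch \<Rightarrow> 'a ch" where
  "Dc k z = (\<lambda>S. Dloc k (z S))"

lemma Dc_add: "Dc k (z + w) = Dc k z + Dc k w" by (simp add: Dc_def fun_eq_iff Dloc_add)
lemma Dc_uminus: "Dc k (- z) = - Dc k z" by (simp add: Dc_def fun_eq_iff Dloc_uminus)
lemma Dc_diff: "Dc k (z - w) = Dc k z - Dc k w" by (simp add: Dc_def fun_eq_iff Dloc_diff)
lemma Dc_zero[simp]: "Dc k 0 = 0" by (simp add: Dc_def fun_eq_iff)

lemma KC_Dc: assumes "z \<in> KC n c i" "1 \<le> k" "k \<le> n" shows "Dc k z \<in> KC n c i"
  unfolding KC_iff
proof (intro conjI; intro allI impI)
  fix S show "Dc k z S \<in> Emod n" using assms by (auto simp: KC_iff Dc_def intro: Emod_Dloc)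
next
  fix S assume "Dc k z S \<noteq> 0"
  then have "z S \<noteq> 0" by (auto simp: Dc_def)
  then show "S \<subseteq> {c..n} \<and> card S = i" using assms by (auto simp: KC_iff)
qed

lemma kd_add: "kd n c (z + w) = kd n c z + kd n c w"
  by (simp add: kd_def fun_eq_iff DN_add distrib_left sum.distrib)
lemma kd_uminus: "kd n c (- z) = - kd n c z"
  by (simp add: kd_def fun_eq_iff DN_uminus sum_negf)
lemma kd_diff: "kd n c (z - w) = kd n c z - kd n c w"
  using kd_add[of n c z "-w"] kd_uminus[of n c w] by simp
lemma kd_zero[simp]: "kd n c 0 = 0"
  by (simp add: kd_def fun_eq_iff)

lemma Kbound_zero[simp]: "0 \<in> Kbound n c i"
  unfolding Kbound_def by (rule image_eqI[of _ _ 0]) auto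
lemma Kbound_diff: "x \<in> Kbound n c i \<Longrightarrow> y \<in> Kbound n c i \<Longrightarrow> x - y \<in> Kbound n c i"
  unfolding Kbound_def by (auto simp: kd_diff[symmetric] intro!: KC_diff)

lemma Dloc_sum: "Dloc k (\<lambda>a. \<Sum>s\<in>A. f s a) a = (\<Sum>s\<in>A. Dloc k (f s) a)"
  by (simp add: Dloc_def sum_distrib_left)

lemma kd_Dc: "c < m \<Longrightarrow> kd n m (Dc c z) = Dc c (kd n m z)"
proof (rule ext, rule ext)
  fix T a assume cm: "c < m"
  show "kd n m (Dc c z) T a = Dc c (kd n m z) T a"
  proof (cases "T \<subseteq> {m..n}")
    case True
    have "kd n m (Dc c z) T a = (\<Sum>s\<in>{m..n} - T. (-1) ^ card {t\<in>T. t < s} * Dloc c (DN n s (z (insert s T))) a)"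
      using True cm by (simp add: kd_def Dc_def Dloc_DN_comm)
    also have "\<dots> = Dloc c (\<lambda>a. \<Sum>s\<in>{m..n} - T. (-1) ^ card {t\<in>T. t < s} * DN n s (z (insert s T)) a) a"
      by (simp add: Dloc_def sum_distrib_left algebra_simps)
    finally show ?thesis using True by (simp add: Dc_def kd_def)
  qed (simp add: kd_def Dc_def Dloc_def)
qed

definition comb :: "nat \<Rightarrow> 'a::zero ch \<Rightarrow> 'a ch \<Rightarrow> 'a ch" where
  "comb c y0 y1 = (\<lambda>S. if c \<in> S then y1 (S - {c}) else y0 S)"
definition sp0 :: "nat \<Rightarrow> 'a::zero ch \<Rightarrow> 'a ch" where
  "sp0 c z = (\<lambda>S. if c \<in> S then 0 else z S)"
definition sp1 :: "nat \<Rightarrow> 'a::zero ch \<Rightarrow> 'a ch" where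
  "sp1 c z = (\<lambda>T. if c \<in> T then 0 else z (insert c T))"
definition vanish :: "nat \<Rightarrow> 'a::zero ch \<Rightarrow> bool" where
  "vanish c x \<longleftrightarrow> (\<forall>S. c \<in> S \<longrightarrow> x S = 0)"

lemma comb_sp: "comb c (sp0 c z) (sp1 c z) = z"
  by (auto simp: comb_def sp0_def sp1_def fun_eq_iff insert_absorb)

lemma comb_add: "comb c (x + x') (y + y') = comb c x y + comb c x' y'"
  by (auto simp: comb_def fun_eq_iff)
lemma comb_diff: "comb c (x - x') (y - y') = comb c x y - comb c x' y'"
  by (auto simp: comb_def fun_eq_iff)
lemma comb_zero[simp]: "comb c 0 0 = 0"
  by (auto simp: comb_def fun_eq_iff)

lemma comb_inj: assumes "vanish c x" "vanish c y" "vanish c x'" "vanish c y'"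
  and "comb c x y = comb c x' y'" shows "x = x' \<and> y = y'"
proof
  show "x = x'"
  proof
    fix S have "comb c x y S = comb c x' y' S" by (simp add: assms(5))
    then show "x S = x' S"
      using assms(1-4) by (cases "c \<in> S") (auto simp: vanish_def comb_def)
  qed
  show "y = y'"
  proof
    fix S have "comb c x y (insert c S) = comb c x' y' (insert c S)" by (simp add: assms(5))
    then show "y S = y' S"
      using assms(1-4) by (cases "c \<in> S") (auto simp: vanish_def comb_def)
  qed
qed

lemma vanish_KC: "z \<in> KC n (Suc c) i \<Longrightarrow> vanish c z"
  unfolding KC_iff vanish_def by force
lemma vanish_kd: "vanish c (kd n (Suc c) z)"
  unfolding vanish_def kd_def by (auto simp: fun_eq_iff)
lemma vanish_add: "vanish c (x::'a::monoid_add ch) \<Longrightarrow> vanish c y \<Longrightarrow> vanish c (x + y)"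
  unfolding vanish_def by auto
lemma vanish_uminus: "vanish c (x::'a::ab_group_add ch) \<Longrightarrow> vanish c (- x)"
  unfolding vanish_def by auto
lemma vanish_diff: "vanish c (x::'a::ab_group_add ch) \<Longrightarrow> vanish c y \<Longrightarrow> vanish c (x - y)"
  unfolding vanish_def by auto
lemma vanish_Dc: "vanish c x \<Longrightarrow> vanish c (Dc k x)"
  unfolding vanish_def Dc_def by auto
lemma vanish_zero[simp]: "vanish c 0"
  unfolding vanish_def by auto

lemma sub_Suc: assumes "S \<subseteq> {c..n}" "c \<notin> S" shows "S \<subseteq> {Suc c..n}"
proof
  fix x assume "x \<in> S"
  then have "c \<le> x" "x \<le> n" "x \<noteq> c" using assms by auto
  then show "x \<in> {Suc c..n}" by simp
qed

lemma sp0_KC: assumes "z \<in> KC n c i" shows "sp0 c z \<in> KC n (Suc c) i"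
  unfolding KC_iff
proof (intro conjI; intro allI impI)
  fix S show "sp0 c z S \<in> Emod n" using assms by (auto simp: KC_iff sp0_def)
next
  fix S assume "sp0 c z S \<noteq> 0"
  then have cS: "c \<notin> S" and nz: "z S \<noteq> 0" by (auto simp: sp0_def split: if_splits)
  with assms have h: "S \<subseteq> {c..n}" "card S = i" by (auto simp: KC_iff)
  have "S \<subseteq> {Suc c..n}" by (rule sub_Suc[OF h(1) cS])
  then show "S \<subseteq> {Suc c..n} \<and> card S = i" using h(2) by simp
qed

lemma sp1_KC: assumes "z \<in> KC n c i" shows "sp1 c z \<in> KC n (Suc c) (i - 1)"
  unfolding KC_iff
proof (intro conjI; intro allI impI)
  fix S show "sp1 c z S \<in> Emod n" using assms by (auto simp: KC_iff sp1_def)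
next
  fix S assume "sp1 c z S \<noteq> 0"
  then have cS: "c \<notin> S" and nz: "z (insert c S) \<noteq> 0" by (auto simp: sp1_def split: if_splits)
  with assms have sub: "insert c S \<subseteq> {c..n}" and cd: "card (insert c S) = i" by (auto simp: KC_iff)
  have "S \<subseteq> {c..n}" using sub by simp
  then have "finite S" by (rule finite_subset[OF _ finite_atLeastAtMost])
  then have "card S = i - 1" using cd cS by simp
  moreover have "S \<subseteq> {Suc c..n}" using sub cS sub_Suc[of S c n] by auto
  ultimately show "S \<subseteq> {Suc c..n} \<and> card S = i - 1" by simp
qed

lemma sp1_KC0: assumes "z \<in> KC n c 0" shows "sp1 c z = 0"
proof (rule ext)
  fix S have "sp1 c z S = 0"
  proof (rule ccontr)
    assume "sp1 c z S \<noteq> 0"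
    then have cS: "c \<notin> S" and nz: "z (insert c S) \<noteq> 0" by (auto simp: sp1_def split: if_splits)
    with assms have sub: "insert c S \<subseteq> {c..n}" and cd: "card (insert c S) = 0" by (auto simp: KC_iff)
    have "S \<subseteq> {c..n}" using sub by simp
    then have "finite S" by (rule finite_subset[OF _ finite_atLeastAtMost])
    then show False using cd by simp
  qed
  then show "sp1 c z S = 0 S" by simp
qed

lemma comb_KC: assumes cn: "c < n" and "y0 \<in> KC n (Suc c) (Suc j)" "y1 \<in> KC n (Suc c) j"
  shows "comb c y0 y1 \<in> KC n c (Suc j)"
  unfolding KC_iff
proof (intro conjI; intro allI impI)
  fix S show "comb c y0 y1 S \<in> Emod n" using assms by (auto simp: KC_iff comb_def)
next
  fix S assume nz: "comb c y0 y1 S \<noteq> 0"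
  show "S \<subseteq> {c..n} \<and> card S = Suc j"
  proof (cases "c \<in> S")
    case True
    then have "y1 (S - {c}) \<noteq> 0" using nz by (simp add: comb_def)
    then have sub: "S - {c} \<subseteq> {Suc c..n}" and cd: "card (S - {c}) = j" using assms by (auto simp: KC_iff)
    have "finite (S - {c})" by (rule finite_subset[OF sub finite_atLeastAtMost])
    then have fin: "finite S" using finite_Diff2[of "{c}" S] by simp
    have "S \<subseteq> {c..n}" using sub True cn by auto
    moreover have "card S = Suc j" using cd True fin card_Suc_Diff1[of S c] by simp
    ultimately show ?thesis by simp
  next
    case False
    then have "y0 S \<noteq> 0" using nz by (simp add: comb_def)
    then have "S \<subseteq> {Suc c..n} \<and> card S = Suc j" using assms(2) by (simp add: KC_iff)
    then show ?thesis by auto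
  qed
qed

lemma kd_comb:
  fixes y0 y1 :: "'a::comm_ring_1 ch"
  assumes cn: "c < n" and y1: "\<forall>S. y1 S \<noteq> 0 \<longrightarrow> S \<subseteq> {Suc c..n}"
  shows "kd n c (comb c y0 y1) = comb c (kd n (Suc c) y0 + Dc c y1) (- kd n (Suc c) y1)"
proof (rule ext, rule ext)
  fix T a
  show "kd n c (comb c y0 y1) T a = comb c (kd n (Suc c) y0 + Dc c y1) (- kd n (Suc c) y1) T a"
  proof (cases "T \<subseteq> {c..n}")
    case False
    have 1: "kd n c (comb c y0 y1) T a = 0" using False by (simp add: kd_def)
    show ?thesis
    proof (cases "c \<in> T")
      case True
      then have "\<not> T - {c} \<subseteq> {Suc c..n}" using False cn by (auto simp: subset_iff)
      then show ?thesis using True 1 by (simp add: comb_def kd_def)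
    next
      case cT: False
      have "\<not> T \<subseteq> {Suc c..n}" using False by (auto simp: subset_iff)
      then have "y1 T = 0" using y1 by auto
      then show ?thesis using cT 1 \<open>\<not> T \<subseteq> {Suc c..n}\<close> by (simp add: comb_def kd_def Dc_def)
    qed
  next
    case True
    show ?thesis
    proof (cases "c \<in> T")
      case cT: True
      define T' where "T' = T - {c}"
      have TT': "T = insert c T'" "c \<notin> T'" using cT by (auto simp: T'_def)
      have T'sub: "T' \<subseteq> {Suc c..n}" using True TT' sub_Suc[of T' c n] by auto
      have set: "{c..n} - T = {Suc c..n} - T'" using TT' by auto
      have trm: "(-1) ^ card {t\<in>T. t<s} * DN n s (comb c y0 y1 (insert s T)) a
          = - ((-1) ^ card {t\<in>T'. t<s} * DN n s (y1 (insert s T')) a)"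
        if s: "s \<in> {Suc c..n} - T'" for s
      proof -
        have e: "{t\<in>T. t<s} = insert c {t\<in>T'. t<s}" using s TT' by auto
        have "finite {t\<in>T'. t<s}" by (rule finite_subset[of _ "{..<s}"]) auto
        then have "card {t\<in>T. t<s} = Suc (card {t\<in>T'. t<s})" using TT' e by simp
        moreover have "insert s T - {c} = insert s T'" using s TT' by auto
        then have "comb c y0 y1 (insert s T) = y1 (insert s T')" using TT' by (simp add: comb_def)
        ultimately show ?thesis by simp
      qed
      have "kd n c (comb c y0 y1) T a = (\<Sum>s\<in>{c..n} - T. (-1) ^ card {t\<in>T. t<s} * DN n s (comb c y0 y1 (insert s T)) a)"
        using True by (simp add: kd_def)
      also have "\<dots> = (\<Sum>s\<in>{Suc c..n} - T'. (-1) ^ card {t\<in>T. t<s} * DN n s (comb c y0 y1 (insert s T)) a)"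
        by (simp only: set)
      also have "\<dots> = (\<Sum>s\<in>{Suc c..n} - T'. - ((-1) ^ card {t\<in>T'. t<s} * DN n s (y1 (insert s T')) a))"
        by (rule sum.cong[OF refl]) (rule trm)
      also have "\<dots> = - kd n (Suc c) y1 T' a" using T'sub by (simp add: kd_def sum_negf)
      finally show ?thesis using cT by (simp add: comb_def T'_def)
    next
      case cT: False
      have Tsub: "T \<subseteq> {Suc c..n}" by (rule sub_Suc[OF True cT])
      have set: "{c..n} - T = insert c ({Suc c..n} - T)" using cT True cn by auto
      have c0: "card {t\<in>T. t<c} = 0"
      proof -
        have "{t\<in>T. t<c} = {}" using Tsub by auto
        then show ?thesis by (simp only: card.empty)
      qed
      have ins: "comb c y0 y1 (insert c T) = y1 T" using cT by (simp add: comb_def)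
      have rest: "(\<Sum>s\<in>{Suc c..n}-T. (-1) ^ card {t\<in>T. t<s} * DN n s (comb c y0 y1 (insert s T)) a)
          = kd n (Suc c) y0 T a"
      proof -
        have "comb c y0 y1 (insert s T) = y0 (insert s T)" if "s \<in> {Suc c..n}-T" for s
          using that cT by (simp add: comb_def)
        then have "(\<Sum>s\<in>{Suc c..n}-T. (-1) ^ card {t\<in>T. t<s} * DN n s (comb c y0 y1 (insert s T)) a)
           = (\<Sum>s\<in>{Suc c..n}-T. (-1) ^ card {t\<in>T. t<s} * DN n s (y0 (insert s T)) a)"
          by (intro sum.cong) auto
        then show ?thesis using Tsub by (simp add: kd_def)
      qed
      define F where "F = (\<lambda>s. (-1) ^ card {t\<in>T. t<s} * DN n s (comb c y0 y1 (insert s T)) a)"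
      have s1: "kd n c (comb c y0 y1) T a = (\<Sum>s\<in>{c..n} - T. F s)"
        using True by (simp add: kd_def F_def)
      have s2: "(\<Sum>s\<in>{c..n} - T. F s) = (\<Sum>s\<in>insert c ({Suc c..n} - T). F s)" by (simp only: set)
      have s3: "(\<Sum>s\<in>insert c ({Suc c..n} - T). F s) = F c + (\<Sum>s\<in>{Suc c..n} - T. F s)" by (rule sum.insert) auto
      have s4: "F c = Dloc c (y1 T) a" unfolding F_def using ins cn by (simp only: c0 power_0 mult_1 DN_def if_True)
      have s5: "(\<Sum>s\<in>{Suc c..n} - T. F s) = kd n (Suc c) y0 T a"
        using rest by (simp add: F_def)
      have "kd n c (comb c y0 y1) T a = Dloc c (y1 T) a + kd n (Suc c) y0 T a"
        using s1 s2 s3 s4 s5 by simp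
      then show ?thesis using cT by (simp add: comb_def Dc_def add.commute)
    qed
  qed
qed

definition phi :: "nat \<Rightarrow> ((nat \<Rightarrow> nat) \<Rightarrow> 'a::zero) \<Rightarrow> 'a ch" where
  "phi n e = (\<lambda>S. if S = {n} then e else 0)"

lemma phi_other: "S \<noteq> {n} \<Longrightarrow> phi n e S = 0" by (simp add: phi_def)

lemma phi_add: "phi n (e + e') = phi n e + (phi n e' :: 'a::monoid_add ch)" by (auto simp: phi_def fun_eq_iff)
lemma phi_diff: "phi n (e - e') = phi n e - (phi n e' :: 'a::ab_group_add ch)" by (auto simp: phi_def fun_eq_iff)
lemma phi_zero[simp]: "phi n 0 = 0" by (auto simp: phi_def fun_eq_iff)
lemma phi_inj: assumes "phi n e = 0" shows "e = 0"
proof -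
  have "phi n e {n} = 0" using assms by simp
  then show ?thesis by (simp add: phi_def)
qed
lemma Dc_phi: "Dc c (phi n e) = phi n (Dloc c e)" by (auto simp: phi_def Dc_def fun_eq_iff)
lemma vanish_phi: assumes "c \<noteq> n" shows "vanish c (phi n e)"
  unfolding vanish_def
proof (intro allI impI)
  fix S assume "c \<in> S" then have "S \<noteq> {n}" using assms by auto
  then show "phi n e S = 0" by (rule phi_other)
qed
lemma comb_phi: assumes "c \<noteq> n" shows "comb c (phi n e) 0 = phi n e"
proof
  fix S show "comb c (phi n e) 0 S = phi n e S"
    using vanish_phi[OF assms, of e] by (cases "c \<in> S") (simp_all add: comb_def vanish_def)
qed

lemma phi_KC: assumes "e \<in> Emod n" "c \<le> n" shows "phi n e \<in> KC n c 1"
  unfolding KC_iff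
proof (intro conjI; intro allI impI)
  fix S show "phi n e S \<in> Emod n"
  proof (cases "S = {n}")
    case True then have "phi n e S = e" by (simp add: phi_def)
    then show ?thesis using assms(1) by simp
  next
    case False then have "phi n e S = 0" by (rule phi_other)
    then show ?thesis by simp
  qed
next
  fix S assume "phi n e S \<noteq> 0"
  then have "S = {n}" using phi_other[of S n e] by auto
  moreover have "{n} \<subseteq> {c..n}" using assms(2) by simp
  ultimately show "S \<subseteq> {c..n} \<and> card S = 1" by simp
qed

lemma kd_phi: assumes "e \<in> Emod m" "m < n" shows "kd n c (phi n (e::_\<Rightarrow>'a::comm_ring_1)) = 0"
proof (rule ext, rule ext)
  fix T a
  have "DN n s (phi n e (insert s T)) a = 0" if "s \<in> {c..n} - T" for s
  proof (cases "insert s T = {n}")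
    case True
    then have sn: "s = n" by auto
    have "e (a(n := Suc (a n))) = 0"
    proof (rule ccontr)
      assume "e (a(n := Suc (a n))) \<noteq> 0"
      then have "valid_idx m (a(n := Suc (a n)))" using assms(1) by (simp add: Emod_def)
      then have "(a(n := Suc (a n))) n = 0" using assms(2) unfolding valid_idx_def by blast
      then show False by simp
    qed
    moreover have "phi n e (insert s T) = e" unfolding phi_def using True by (rule if_P)
    moreover have "DN n n e a = of_nat (Suc (a n)) * e (a(n := Suc (a n)))" by (simp add: DN_def Dpol_def)
    ultimately show ?thesis using sn by simp
  next
    case False
    then show ?thesis by (simp add: phi_other[OF False])
  qed
  then have "(\<Sum>s\<in>{c..n} - T. (-1) ^ card {t\<in>T. t < s} * DN n s (phi n e (insert s T)) a) = 0"
    by (intro sum.neutral ballI) (simp only: mult_zero_right)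
  then show "kd n c (phi n e) T a = 0 T a" by (simp add: kd_def)
qed


lemma Kcycles_iff: "z \<in> Kcycles n c i \<longleftrightarrow> z \<in> KC n c i \<and> kd n c z = 0"
  by (simp add: Kcycles_def zero_fun_def)
lemma Kbound_iff: "x \<in> Kbound n c i \<longleftrightarrow> (\<exists>y\<in>KC n c (Suc i). x = kd n c y)"
  by (auto simp: Kbound_def)
lemma Kbound1_iff: "x \<in> Kbound n c 1 \<longleftrightarrow> (\<exists>y\<in>KC n c 2. x = kd n c y)"
  unfolding Kbound_iff Suc_1 ..
lemma KC_supp: "y \<in> KC n c j \<Longrightarrow> \<forall>S. y S \<noteq> 0 \<longrightarrow> S \<subseteq> {c..n}"
  by (simp add: KC_iff)

lemma cyc_split:
  fixes z :: "'a::comm_ring_1 ch"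
  assumes cn: "c < n" and z: "z \<in> KC n c i" and cyc: "kd n c z = 0"
  shows "kd n (Suc c) (sp0 c z) + Dc c (sp1 c z) = 0" "kd n (Suc c) (sp1 c z) = 0"
proof -
  have s1: "sp1 c z \<in> KC n (Suc c) (i - 1)" by (rule sp1_KC[OF z])
  have "kd n c z = comb c (kd n (Suc c) (sp0 c z) + Dc c (sp1 c z)) (- kd n (Suc c) (sp1 c z))"
    using kd_comb[OF cn KC_supp[OF s1], of "sp0 c z"] comb_sp[of c z] by simp
  then have "comb c (kd n (Suc c) (sp0 c z) + Dc c (sp1 c z)) (- kd n (Suc c) (sp1 c z)) = comb c 0 0"
    using cyc by simp
  moreover have "vanish c (kd n (Suc c) (sp0 c z) + Dc c (sp1 c z))"
    by (intro vanish_add vanish_kd vanish_Dc vanish_KC[OF s1])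
  moreover have "vanish c (- kd n (Suc c) (sp1 c z))" by (intro vanish_uminus vanish_kd)
  ultimately have "kd n (Suc c) (sp0 c z) + Dc c (sp1 c z) = 0 \<and> - kd n (Suc c) (sp1 c z) = 0"
    by (intro comb_inj) auto
  then show "kd n (Suc c) (sp0 c z) + Dc c (sp1 c z) = 0" "kd n (Suc c) (sp1 c z) = 0" by auto
qed

definition Pinv :: "nat \<Rightarrow> nat \<Rightarrow> 'a::field_char_0 itself \<Rightarrow> bool" where
 "Pinv n c (_::'a itself) \<longleftrightarrow>
   (\<forall>i. i \<noteq> 1 \<longrightarrow> (Kcycles n c i :: 'a ch set) \<subseteq> Kbound n c i)
 \<and> (\<forall>z\<in>(Kcycles n c 1 :: 'a ch set). \<exists>e\<in>Emod (c - 1). z - phi n e \<in> Kbound n c 1)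
 \<and> (\<forall>e\<in>(Emod (c - 1) :: ((nat\<Rightarrow>nat)\<Rightarrow>'a) set). phi n e \<in> Kbound n c 1 \<longrightarrow> e = 0)"


lemma Pinv_step:
  fixes c n :: nat
  assumes c1: "1 \<le> c" and cn: "c < n" and IH: "Pinv n (Suc c) TYPE('a::field_char_0)"
  shows "Pinv n c TYPE('a)"
proof -
  let ?d = "kd n (Suc c) :: 'a ch \<Rightarrow> 'a ch"
  have IHc: "(\<forall>i. i \<noteq> 1 \<longrightarrow> (Kcycles n (Suc c) i :: 'a ch set) \<subseteq> Kbound n (Suc c) i)
 \<and> (\<forall>z\<in>(Kcycles n (Suc c) 1 :: 'a ch set). \<exists>e\<in>Emod c. z - phi n e \<in> Kbound n (Suc c) 1)
 \<and> (\<forall>e\<in>(Emod c :: ((nat\<Rightarrow>nat)\<Rightarrow>'a) set). phi n e \<in> Kbound n (Suc c) 1 \<longrightarrow> e = 0)"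
    using IH unfolding Pinv_def diff_Suc_1 .
  note IHa = conjunct1[OF IHc] and IHb = conjunct1[OF conjunct2[OF IHc]] and IHd = conjunct2[OF conjunct2[OF IHc]]
  have IH1: "\<exists>u\<in>KC n (Suc c) (Suc i). z = ?d u" if "i \<noteq> 1" "z \<in> Kcycles n (Suc c) i" for i z
  proof -
    have "Kcycles n (Suc c) i \<subseteq> (Kbound n (Suc c) i :: 'a ch set)" using IHa that(1) by blast
    then have "z \<in> Kbound n (Suc c) i" using that(2) by blast
    then show ?thesis unfolding Kbound_iff by blast
  qed
  have IH2: "\<exists>e\<in>Emod c. \<exists>u\<in>KC n (Suc c) 2. z - phi n e = ?d u" if zc: "z \<in> Kcycles n (Suc c) 1" for z
  proof -
    obtain e where e: "e \<in> Emod c" and ze: "z - phi n e \<in> Kbound n (Suc c) 1" using IHb[rule_format, OF zc] by (rule bexE)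
    from ze have "\<exists>u\<in>KC n (Suc c) 2. z - phi n e = ?d u" unfolding Kbound1_iff .
    then show ?thesis by (rule bexI[OF _ e])
  qed
  have IH3: "e = 0" if "e \<in> Emod c" "phi n e = ?d u" "u \<in> KC n (Suc c) 2" for e u
  proof -
    have "phi n e \<in> Kbound n (Suc c) 1" unfolding Kbound1_iff by (rule bexI[where x=u], rule that(2), rule that(3))
    then show ?thesis by (rule IHd[rule_format, OF that(1)])
  qed
  have comm: "?d (Dc c w) = Dc c (?d w)" for w by (rule kd_Dc) simp
  have kdc: "kd n c (comb c y0 y1) = comb c (?d y0 + Dc c y1) (- ?d y1)" if "y1 \<in> KC n (Suc c) j" for y0 y1 j
    by (rule kd_comb[OF cn KC_supp[OF that]])
  have cnn: "c \<le> n" using cn by simp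
  have kill: "\<exists>w\<in>KC n (Suc c) i. z1 = ?d w"
    if i1: "1 \<le> i" and z1: "z1 \<in> KC n (Suc c) (i - 1)" and dz1: "?d z1 = 0"
      and z0: "z0 \<in> KC n (Suc c) i" and dz0: "?d z0 + Dc c z1 = 0" for i z0 z1
  proof (cases "i - 1 = 1")
    case False
    have "z1 \<in> Kcycles n (Suc c) (i - 1)" using z1 dz1 by (simp add: Kcycles_iff)
    then obtain w where "w \<in> KC n (Suc c) (Suc (i - 1))" "z1 = ?d w" using IH1[OF False] by blast
    then show ?thesis using i1 by auto
  next
    case True
    then have i2: "i = 2" by simp
    have "z1 \<in> Kcycles n (Suc c) 1" using z1 dz1 True by (simp add: Kcycles_iff)
    then obtain e w where e: "e \<in> Emod c" and w: "w \<in> KC n (Suc c) 2" and ew: "z1 - phi n e = ?d w"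
      using IH2 by blast
    have pe: "phi n e = z1 - ?d w" using ew by (simp add: ew[symmetric] algebra_simps)
    have dz1': "Dc c z1 = - ?d z0" using dz0 by (simp add: eq_neg_iff_add_eq_0 add.commute)
    have "phi n (Dloc c e) = Dc c (phi n e)" by (simp add: Dc_phi)
    also have "\<dots> = Dc c z1 - Dc c (?d w)" by (simp add: pe Dc_diff)
    also have "\<dots> = ?d (- z0 - Dc c w)" by (simp add: dz1' kd_diff kd_uminus comm)
    finally have pd: "phi n (Dloc c e) = ?d (- z0 - Dc c w)" .
    have "- z0 - Dc c w \<in> KC n (Suc c) 2"
      using z0 i2 w by (intro KC_diff KC_uminus KC_Dc c1 cnn) auto
    moreover have "Dloc c e \<in> Emod c" by (rule Emod_Dloc[OF e c1 order_refl])
    ultimately have "Dloc c e = 0" using IH3 pd by blast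
    then have "e = 0" by (rule Dloc_inj)
    then have "z1 = ?d w" using ew by simp
    with w i2 show ?thesis by auto
  qed
  have red: "\<exists>w\<in>KC n (Suc c) i. sp1 c z = ?d w \<and> ?d (sp0 c z + Dc c w) = 0"
    if z: "z \<in> Kcycles n c i" for z :: "'a ch" and i
  proof -
    have zK: "z \<in> KC n c i" and zc: "kd n c z = 0" using z by (auto simp: Kcycles_iff)
    note cs = cyc_split[OF cn zK zc]
    have "\<exists>w\<in>KC n (Suc c) i. sp1 c z = ?d w"
    proof (cases "i = 0")
      case True
      then have "sp1 c z = 0" using sp1_KC0 zK by blast
      then show ?thesis using True by (intro bexI[of _ 0]) auto
    next
      case False
      then show ?thesis using kill[of i "sp1 c z" "sp0 c z"] sp1_KC[OF zK] sp0_KC[OF zK] cs by auto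
    qed
    then obtain w where w: "w \<in> KC n (Suc c) i" "sp1 c z = ?d w" by blast
    have "?d (sp0 c z + Dc c w) = ?d (sp0 c z) + Dc c (sp1 c z)" by (simp add: kd_add comm w(2))
    then show ?thesis using w cs(1) by auto
  qed
  have part1: "z \<in> Kbound n c i" if i1: "i \<noteq> 1" and z: "z \<in> Kcycles n c i" for z :: "'a ch" and i
  proof -
    have zK: "z \<in> KC n c i" using z by (auto simp: Kcycles_iff)
    obtain w where w: "w \<in> KC n (Suc c) i" "sp1 c z = ?d w" "?d (sp0 c z + Dc c w) = 0"
      using red[OF z] by blast
    have "sp0 c z + Dc c w \<in> KC n (Suc c) i" by (rule KC_add[OF sp0_KC[OF zK] KC_Dc[OF w(1) c1 cnn]])
    then have "sp0 c z + Dc c w \<in> Kcycles n (Suc c) i" using w(3) by (simp add: Kcycles_iff)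
    then obtain u where u: "u \<in> KC n (Suc c) (Suc i)" "sp0 c z + Dc c w = ?d u" using IH1[OF i1] by blast
    have mw: "- w \<in> KC n (Suc c) i" using w(1) by (rule KC_uminus)
    have "kd n c (comb c u (- w)) = comb c (?d u + Dc c (- w)) (- ?d (- w))" by (rule kdc[OF mw])
    also have "\<dots> = comb c (sp0 c z) (sp1 c z)" using u(2)[symmetric] w(2)[symmetric] by (simp add: Dc_uminus kd_uminus)
    also have "\<dots> = z" by (rule comb_sp)
    finally have "z = kd n c (comb c u (- w))" by simp
    moreover have "comb c u (- w) \<in> KC n c (Suc i)" by (rule comb_KC[OF cn u(1) mw])
    ultimately show ?thesis unfolding Kbound_iff by blast
  qed
  have part2: "\<exists>e\<in>Emod (c - 1). z - phi n e \<in> Kbound n c 1" if z: "z \<in> Kcycles n c 1" for z :: "'a ch"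
  proof -
    have zK: "z \<in> KC n c 1" using z by (auto simp: Kcycles_iff)
    obtain w where w: "w \<in> KC n (Suc c) 1" "sp1 c z = ?d w" "?d (sp0 c z + Dc c w) = 0"
      using red[OF z] by blast
    have "sp0 c z + Dc c w \<in> KC n (Suc c) 1" by (rule KC_add[OF sp0_KC[OF zK] KC_Dc[OF w(1) c1 cnn]])
    then have "sp0 c z + Dc c w \<in> Kcycles n (Suc c) 1" using w(3) by (simp add: Kcycles_iff)
    then obtain e u where e: "e \<in> Emod c" and u: "u \<in> KC n (Suc c) 2"
      and eu: "sp0 c z + Dc c w - phi n e = ?d u" using IH2 by blast
    define e0 where "e0 = Pc c e"
    define g where "g = Iloc c e"
    have e0: "e0 \<in> Emod (c - 1)" unfolding e0_def by (rule Emod_Pc[OF e c1])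
    have g: "g \<in> Emod c" unfolding g_def by (rule Emod_Iloc[OF e])
    have edec: "phi n e = phi n e0 + phi n (Dloc c g)"
      unfolding e0_def g_def by (simp add: phi_add[symmetric] Pc_Dloc_Iloc)
    define v where "v = - w + phi n g"
    have v: "v \<in> KC n (Suc c) 1" unfolding v_def
      using w(1) g cn by (intro KC_add KC_uminus phi_KC Emod_mono[OF g]) auto
    have dpg: "?d (phi n g) = 0" by (rule kd_phi[OF g cn])
    have "kd n c (comb c u v) = comb c (?d u + Dc c v) (- ?d v)" by (rule kdc[OF v])
    also have "?d u + Dc c v = sp0 c z - phi n e0"
    proof -
      have dv: "Dc c v = - Dc c w + phi n (Dloc c g)" unfolding v_def by (simp add: Dc_add Dc_uminus Dc_diff Dc_phi)
      have "?d u + Dc c v = sp0 c z + Dc c w - (phi n e0 + phi n (Dloc c g)) + (- Dc c w + phi n (Dloc c g))"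
        using eu[symmetric] edec dv by simp
      also have "\<dots> = sp0 c z - phi n e0" by (simp add: algebra_simps)
      finally show ?thesis .
    qed
    also have "- ?d v = sp1 c z" unfolding v_def using w(2) dpg by (simp add: kd_add kd_uminus kd_diff)
    also have "comb c (sp0 c z - phi n e0) (sp1 c z) = comb c (sp0 c z) (sp1 c z) - comb c (phi n e0) 0"
      using comb_diff[of c "sp0 c z" "phi n e0" "sp1 c z" 0] by simp
    also have "\<dots> = z - phi n e0" using cn by (simp add: comb_sp comb_phi)
    finally have "z - phi n e0 = kd n c (comb c u v)" by simp
    moreover have "comb c u v \<in> KC n c 2"
      using comb_KC[OF cn _ v, of u] u by (simp add: numeral_2_eq_2)
    ultimately have "z - phi n e0 \<in> Kbound n c 1" unfolding Kbound1_iff by blast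
    then show ?thesis by (rule bexI[OF _ e0])
  qed
  have part3: "e = 0" if e: "e \<in> Emod (c - 1)" and pe: "phi n e \<in> Kbound n c 1" for e :: "(nat \<Rightarrow> nat) \<Rightarrow> 'a"
  proof -
    obtain y where y: "y \<in> KC n c 2" and py: "phi n e = kd n c y"
      using pe unfolding Kbound1_iff by (rule bexE)
    have y0: "sp0 c y \<in> KC n (Suc c) 2" by (rule sp0_KC[OF y])
    have y1: "sp1 c y \<in> KC n (Suc c) 1" using sp1_KC[OF y] by simp
    have "comb c (?d (sp0 c y) + Dc c (sp1 c y)) (- ?d (sp1 c y)) = kd n c y"
      using kdc[OF y1, of "sp0 c y"] comb_sp[of c y] by simp
    also have "\<dots> = comb c (phi n e) 0" using comb_phi[of c n e] py cn by simp
    finally have "comb c (?d (sp0 c y) + Dc c (sp1 c y)) (- ?d (sp1 c y)) = comb c (phi n e) 0" .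
    moreover have "vanish c (?d (sp0 c y) + Dc c (sp1 c y))"
      by (intro vanish_add vanish_kd vanish_Dc vanish_KC[OF y1])
    moreover have "vanish c (- ?d (sp1 c y))" by (intro vanish_uminus vanish_kd)
    moreover have "vanish c (phi n e)" using cn by (intro vanish_phi) simp
    ultimately have eq: "?d (sp0 c y) + Dc c (sp1 c y) = phi n e \<and> - ?d (sp1 c y) = 0"
      by (intro comb_inj) auto
    then have "sp1 c y \<in> Kcycles n (Suc c) 1" using y1 by (simp add: Kcycles_iff)
    then obtain g w where g: "g \<in> Emod c" and w: "w \<in> KC n (Suc c) 2"
      and gw: "sp1 c y - phi n g = ?d w" using IH2 by blast
    have "phi n (e - Dloc c g) = phi n e - Dc c (phi n g)" by (simp add: phi_diff Dc_phi)
    also have "\<dots> = ?d (sp0 c y) + Dc c (sp1 c y - phi n g)" using eq by (simp add: Dc_diff)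
    also have "\<dots> = ?d (sp0 c y + Dc c w)" using gw by (simp add: kd_add comm)
    finally have pd: "phi n (e - Dloc c g) = ?d (sp0 c y + Dc c w)" .
    have "sp0 c y + Dc c w \<in> KC n (Suc c) 2" using y0 w by (intro KC_add KC_Dc c1 cnn)
    moreover have "e - Dloc c g \<in> Emod c"
      by (intro Emod_diff Emod_Dloc[OF g c1 order_refl] Emod_mono[OF e]) simp
    ultimately have "e - Dloc c g = 0" using IH3 pd by blast
    then have eD: "e = Dloc c g" by simp
    show "e = 0"
    proof (rule ext)
      fix a show "e a = 0 a"
      proof (cases "a c = 0")
        case True then show ?thesis using eD by (simp add: Dloc_def)
      next
        case False
        show ?thesis
        proof (rule ccontr)
          assume "e a \<noteq> 0 a"
          then have "valid_idx (c - 1) a" using e by (simp add: Emod_def)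
          then have "a c = 0" using c1 unfolding valid_idx_def by simp
          then show False using False by simp
        qed
      qed
    qed
  qed
  show ?thesis unfolding Pinv_def
  proof (intro conjI allI impI ballI subsetI)
    fix i z assume "i \<noteq> 1" "z \<in> (Kcycles n c i :: 'a ch set)"
    then show "z \<in> Kbound n c i" by (rule part1)
  next
    fix z assume "z \<in> (Kcycles n c 1 :: 'a ch set)"
    then show "\<exists>e\<in>Emod (c - 1). z - phi n e \<in> Kbound n c 1" by (rule part2)
  next
    fix e :: "(nat\<Rightarrow>nat)\<Rightarrow>'a" assume "e \<in> Emod (c - 1)" "phi n e \<in> Kbound n c 1"
    then show "e = 0" by (rule part3)
  qed
qed


lemma KCn_supp: assumes "z \<in> KC n n i" "z S \<noteq> 0" shows "S = {} \<and> i = 0 \<or> S = {n} \<and> i = 1"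
proof -
  have "S \<subseteq> {n}" "card S = i" using assms by (auto simp: KC_iff)
  then show ?thesis by (auto simp: subset_singleton_iff)
qed

lemma KCn_big: assumes "z \<in> KC n n i" "2 \<le> i" shows "z = 0"
proof (rule ext)
  fix S show "z S = 0 S"
  proof (rule ccontr)
    assume "z S \<noteq> 0 S"
    then have "z S \<noteq> 0" by simp
    then show False using KCn_supp[OF assms(1)] assms(2) by auto
  qed
qed

lemma Pinv_base:
  assumes n1: "1 \<le> n" shows "Pinv n n TYPE('a::field_char_0)"
proof -
  have kd0: "kd n n z {} = DN n n (z {n})" for z :: "'a ch"
    by (rule ext) (simp add: kd_def)
  have part1: "z \<in> Kbound n n i" if i1: "i \<noteq> 1" and z: "z \<in> Kcycles n n i" for z :: "'a ch" and i
  proof (cases "i = 0")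
    case True
    have zK: "z \<in> KC n n 0" using z True by (simp add: Kcycles_iff)
    define w where "w = phi n (Ipol n (z {}))"
    have Ip: "Ipol n (z {}) \<in> Emod n" using zK n1 by (intro Emod_Ipol) (auto simp: KC_iff)
    have wK: "w \<in> KC n n (Suc 0)" unfolding w_def using phi_KC[OF Ip, of n] by simp
    have "kd n n w = z"
    proof (rule ext)
      fix T show "kd n n w T = z T"
      proof (cases "T = {}")
        case True
        have "kd n n w {} = Dpol n (Ipol n (z {}))" unfolding kd0 by (simp add: w_def phi_def DN_def)
        then show ?thesis using True by (simp add: Dpol_Ipol)
      next
        case False
        have zT: "z T = 0" using KCn_supp[OF zK, of T] False by auto
        have "kd n n w T = 0"
        proof (cases "T \<subseteq> {n..n}")
          case True
          then have "T = {n}" using False by (auto simp: subset_singleton_iff)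
          then show ?thesis by (simp add: kd_def fun_eq_iff)
        next
          case False then show ?thesis by (simp add: kd_def fun_eq_iff)
        qed
        then show ?thesis using zT by simp
      qed
    qed
    then show ?thesis unfolding Kbound_iff using wK True by blast
  next
    case False
    then have "2 \<le> i" using i1 by simp
    then have "z = 0" using KCn_big z by (auto simp: Kcycles_iff)
    then show ?thesis by simp
  qed
  have part2: "\<exists>e\<in>Emod (n - 1). z - phi n e \<in> Kbound n n 1" if z: "z \<in> Kcycles n n 1" for z :: "'a ch"
  proof -
    have zK: "z \<in> KC n n 1" and zc: "kd n n z = 0" using z by (auto simp: Kcycles_iff)
    define e where "e = z {n}"
    have eE: "e \<in> Emod n" using zK by (simp add: KC_iff e_def)
    have De: "Dpol n e = 0" using kd0[of z] zc by (simp add: e_def DN_def)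
    have ean: "a n = 0" if "e a \<noteq> 0" for a
    proof (rule ccontr)
      assume "a n \<noteq> 0"
      then obtain m where m: "a n = Suc m" by (cases "a n") auto
      have aa: "a(n := Suc m) = a" using m fun_upd_triv by metis
      have "Dpol n e (a(n := m)) = of_nat (Suc m) * e a"
        using aa by (simp add: Dpol_def del: of_nat_Suc)
      then have "of_nat (Suc m) * e a = (0::'a)" using De by simp
      then show False using that by (simp del: of_nat_Suc)
    qed
    have eE1: "e \<in> Emod (n - 1)"
      unfolding Emod_def
    proof (intro CollectI conjI allI impI)
      show "finite {a. e a \<noteq> 0}" using eE by (simp add: Emod_def)
    next
      fix a assume ea: "e a \<noteq> 0"
      then have v: "valid_idx n a" using eE by (simp add: Emod_def)
      show "valid_idx (n - 1) a" unfolding valid_idx_def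
      proof (intro allI impI)
        fix k assume "k = 0 \<or> n - 1 < k"
        then have "k = 0 \<or> n < k \<or> k = n" by auto
        then show "a k = 0" using v ean[OF ea] by (auto simp: valid_idx_def)
      qed
    qed
    have "z = phi n e"
    proof (rule ext)
      fix S show "z S = phi n e S"
      proof (cases "S = {n}")
        case True then show ?thesis by (simp add: phi_def e_def)
      next
        case False
        then have "z S = 0" using KCn_supp[OF zK, of S] by auto
        then show ?thesis using False by (simp add: phi_other)
      qed
    qed
    then have "z - phi n e \<in> Kbound n n 1" by simp
    then show ?thesis using eE1 by blast
  qed
  have part3: "e = 0" if pe: "phi n e \<in> Kbound n n 1" for e :: "(nat \<Rightarrow> nat) \<Rightarrow> 'a"
  proof -
    obtain y where y: "y \<in> KC n n 2" and py: "phi n e = kd n n y"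
      using pe unfolding Kbound1_iff by (rule bexE)
    have "y = 0" by (rule KCn_big[OF y]) simp
    then have "phi n e = 0" using py by simp
    then show ?thesis by (rule phi_inj)
  qed
  show ?thesis unfolding Pinv_def
  proof (intro conjI allI impI ballI subsetI)
    fix i z assume "i \<noteq> 1" "z \<in> (Kcycles n n i :: 'a ch set)"
    then show "z \<in> Kbound n n i" by (rule part1)
  next
    fix z assume "z \<in> (Kcycles n n 1 :: 'a ch set)"
    then show "\<exists>e\<in>Emod (n - 1). z - phi n e \<in> Kbound n n 1" by (rule part2)
  next
    fix e :: "(nat\<Rightarrow>nat)\<Rightarrow>'a" assume "e \<in> Emod (n - 1)" "phi n e \<in> Kbound n n 1"
    then show "e = 0" using part3 by blast
  qed
qed

lemma Pinv_all: "1 \<le> c \<Longrightarrow> c \<le> n \<Longrightarrow> Pinv n c TYPE('a::field_char_0)"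
proof (induction "n - c" arbitrary: c)
  case 0
  then have "c = n" by simp
  then show ?case using 0 Pinv_base by simp
next
  case (Suc k)
  then have "c < n" "k = n - Suc c" by auto
  then have "Pinv n (Suc c) TYPE('a)" using Suc by auto
  then show ?case by (rule Pinv_step[OF Suc.prems(1) \<open>c < n\<close>])
qed


theorem lemma4p2:
  fixes n c :: nat
  assumes "1 \<le> c" and "c \<le> n"
  shows "(\<forall>i. i \<noteq> 1 \<longrightarrow> Kacyclic_at n c i TYPE('a::field_char_0))
       \<and> (\<exists>\<phi> :: ((nat \<Rightarrow> nat) \<Rightarrow> 'a) \<Rightarrow> nat set \<Rightarrow> (nat \<Rightarrow> nat) \<Rightarrow> 'a. H1_iso n c \<phi>)"
proof -
  have P: "Pinv n c TYPE('a)" by (rule Pinv_all[OF assms])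
  note Pa = conjunct1[OF P[unfolded Pinv_def]]
    and Pb = conjunct1[OF conjunct2[OF P[unfolded Pinv_def]]]
    and Pd = conjunct2[OF conjunct2[OF P[unfolded Pinv_def]]]
  have A: "\<forall>i. i \<noteq> 1 \<longrightarrow> Kacyclic_at n c i TYPE('a)"
    unfolding Kacyclic_at_def using Pa by blast
  have c1n: "c - 1 < n" using assms by simp
  have H: "H1_iso n c (phi n :: ((nat \<Rightarrow> nat) \<Rightarrow> 'a) \<Rightarrow> 'a ch)"
    unfolding H1_iso_def
  proof (intro conjI)
    show "\<forall>e\<in>Emod (c - 1). phi n e \<in> (Kcycles n c 1 :: 'a ch set)"
    proof
      fix e :: "(nat \<Rightarrow> nat) \<Rightarrow> 'a" assume e: "e \<in> Emod (c - 1)"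
      have "phi n e \<in> KC n c 1" using Emod_mono[OF e] c1n assms(2) by (intro phi_KC) auto
      moreover have "kd n c (phi n e) = 0" by (rule kd_phi[OF e c1n])
      ultimately show "phi n e \<in> Kcycles n c 1" by (simp add: Kcycles_iff)
    qed
  next
    show "\<forall>x\<in>Emod (c - 1). \<forall>y\<in>Emod (c - 1).
        phi n (\<lambda>a. x a + y a) = (\<lambda>S a. phi n x S a + (phi n y S a :: 'a))"
      by (auto simp: phi_def fun_eq_iff)
  next
    show "\<forall>s. \<forall>x\<in>Emod (c - 1). phi n (\<lambda>a. s * x a) = (\<lambda>S a. s * (phi n x S a :: 'a))"
      by (auto simp: phi_def fun_eq_iff)
  next
    show "\<forall>z\<in>Kcycles n c 1. \<exists>!e. e \<in> Emod (c - 1) \<and> (\<lambda>S a. z S a - phi n e S a) \<in> (Kbound n c 1 :: 'a ch set)"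
    proof
      fix z :: "'a ch" assume z: "z \<in> Kcycles n c 1"
      have eq: "(\<lambda>S a. z S a - phi n e S a) = z - phi n e" for e by (simp add: fun_eq_iff)
      obtain e where e: "e \<in> Emod (c - 1)" and ze: "z - phi n e \<in> Kbound n c 1"
        using Pb[rule_format, OF z] by (rule bexE)
      show "\<exists>!e. e \<in> Emod (c - 1) \<and> (\<lambda>S a. z S a - phi n e S a) \<in> Kbound n c 1"
      proof (rule ex1I[where a=e])
        show "e \<in> Emod (c - 1) \<and> (\<lambda>S a. z S a - phi n e S a) \<in> Kbound n c 1"
          using e ze by (simp add: eq)
      next
        fix e' assume h: "e' \<in> Emod (c - 1) \<and> (\<lambda>S a. z S a - phi n e' S a) \<in> Kbound n c 1"
        then have e': "e' \<in> Emod (c - 1)" and ze': "z - phi n e' \<in> Kbound n c 1" by (simp_all add: eq)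
        have "(z - phi n e) - (z - phi n e') \<in> Kbound n c 1" by (rule Kbound_diff[OF ze ze'])
        then have "phi n (e' - e) \<in> Kbound n c 1" by (simp add: phi_diff)
        moreover have "e' - e \<in> Emod (c - 1)" by (rule Emod_diff[OF e' e])
        ultimately have "e' - e = 0" using Pd by blast
        then show "e' = e" by simp
      qed
    qed
  next
    show "\<forall>j. 1 \<le> j \<and> j < c \<longrightarrow> (\<forall>x\<in>Emod (c - 1).
        (\<lambda>S a. phi n (Xloc j x) S a - Xloc j (phi n x S) a) \<in> (Kbound n c 1 :: 'a ch set)
      \<and> (\<lambda>S a. phi n (Dloc j x) S a - Dloc j (phi n x S) a) \<in> (Kbound n c 1 :: 'a ch set))"
    proof (intro allI impI ballI conjI)
      fix j and x :: "(nat \<Rightarrow> nat) \<Rightarrow> 'a"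
      have "(\<lambda>S a. phi n (Xloc j x) S a - Xloc j (phi n x S) a) = (0 :: 'a ch)"
        by (simp add: phi_def Xloc_def fun_eq_iff)
      then show "(\<lambda>S a. phi n (Xloc j x) S a - Xloc j (phi n x S) a) \<in> Kbound n c 1" by simp
      have "(\<lambda>S a. phi n (Dloc j x) S a - Dloc j (phi n x S) a) = (0 :: 'a ch)"
        by (simp add: phi_def Dloc_def fun_eq_iff)
      then show "(\<lambda>S a. phi n (Dloc j x) S a - Dloc j (phi n x S) a) \<in> Kbound n c 1" by simp
    qed
  qed
  show ?thesis using A H by blast
qed

end
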